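(* Let $\mathbf{A}=(A,<^{\mathbf{A}},P_1^{\mathbf{A}},P_2^{\mathbf{A}})\in\mathcal{P}_2$. Then the tournament $p(\mathbf{A})$ is isomorphic to an induced subtournament of $\mathbf{S}(2)$.
   Context: $\mathcal{P}_2$ is the class of finite structures $(A,<^{\mathbf{A}},P_1^{\mathbf{A}},P_2^{\mathbf{A}})$ with $<^{\mathbf{A}}$ a linear order on $A$ and $(P_1^{\mathbf{A}},P_2^{\mathbf{A}})$ a partition of $A$. Writing $a\sim b$ when $a,b$ lie in the same part, $p(\mathbf{A})$ is the tournament on $A$ with an arc from $a$ to $b$ iff either ($a\sim b$ and $a<^{\mathbf{A}}b$) or ($a\not\sim b$ and $b<^{\mathbf{A}}a$). $\mathbf{S}(2)$ is the tournament whose vertices are the points of the unit circle of $\mathbb{C}$ with rational argument, with an arc from $x$ to $y$ iff $0<\arg(y/x)<\pi$. *)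

theory Defs
  imports "HOL-Analysis.Analysis"
begin

definition in_P2 :: "'a set \<Rightarrow> ('a \<Rightarrow> 'a \<Rightarrow> bool) \<Rightarrow> 'a set \<Rightarrow> 'a set \<Rightarrow> bool" where
  "in_P2 A lt P1 P2 \<longleftrightarrow>
     finite A \<and>
     (\<forall>a\<in>A. \<not> lt a a) \<and>
     (\<forall>a\<in>A. \<forall>b\<in>A. \<forall>c\<in>A. lt a b \<longrightarrow> lt b c \<longrightarrow> lt a c) \<and>
     (\<forall>a\<in>A. \<forall>b\<in>A. a \<noteq> b \<longrightarrow> lt a b \<or> lt b a) \<and>
     P1 \<union> P2 = A \<and> P1 \<inter> P2 = {}"

definition same_part :: "'a set \<Rightarrow> 'a set \<Rightarrow> 'a \<Rightarrow> 'a \<Rightarrow> bool" where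
  "same_part P1 P2 a b \<longleftrightarrow> (a \<in> P1 \<and> b \<in> P1) \<or> (a \<in> P2 \<and> b \<in> P2)"

definition p_arc :: "('a \<Rightarrow> 'a \<Rightarrow> bool) \<Rightarrow> 'a set \<Rightarrow> 'a set \<Rightarrow> 'a \<Rightarrow> 'a \<Rightarrow> bool" where
  "p_arc lt P1 P2 a b \<longleftrightarrow>
     (same_part P1 P2 a b \<and> lt a b) \<or> (\<not> same_part P1 P2 a b \<and> lt b a)"

definition S2_vertices :: "complex set" where
  "S2_vertices = {z. norm z = 1 \<and> Arg z \<in> \<rat>}"

definition S2_arc :: "complex \<Rightarrow> complex \<Rightarrow> bool" where
  "S2_arc x y \<longleftrightarrow> 0 < Arg (y / x) \<and> Arg (y / x) < pi"

end

theory Submission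
  imports Defs
begin

lemma S2_arc_cis: "S2_arc (cis a) (cis b) \<longleftrightarrow> sin (b - a) > 0"
  unfolding S2_arc_def cis_divide Arg_lt_pi by simp

lemma sin_pos2: "(0<x \<and> x<pi) \<or> (-2*pi<x \<and> x< -pi) \<Longrightarrow> sin x > 0"
proof (elim disjE conjE)
  assume "0<x" "x<pi" thus ?thesis by (rule sin_gt_zero)
next
  assume "-2*pi<x" "x< -pi"
  hence "sin (x + 2*pi) > 0" by (intro sin_gt_zero) auto
  thus ?thesis by (simp add: sin_add)
qed

lemma sin_neg2: "(-pi<x \<and> x<0) \<or> (pi<x \<and> x<2*pi) \<Longrightarrow> sin x < 0"
  using sin_pos2[of "-x"] by auto

theorem lemma1:
  fixes A :: "'a set" and lt :: "'a \<Rightarrow> 'a \<Rightarrow> bool" and P1 P2 :: "'a set"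
  assumes "in_P2 A lt P1 P2"
  shows "\<exists>f. inj_on f A \<and> f ` A \<subseteq> S2_vertices \<and>
             (\<forall>a\<in>A. \<forall>b\<in>A. p_arc lt P1 P2 a b \<longleftrightarrow> S2_arc (f a) (f b))"
proof -
  note A = assms[unfolded in_P2_def]
  note A2 = A[THEN conjunct2, THEN conjunct1]
  note A3 = A[THEN conjunct2, THEN conjunct2, THEN conjunct1]
  note A4 = A[THEN conjunct2, THEN conjunct2, THEN conjunct2, THEN conjunct1]
  note A5 = A[THEN conjunct2, THEN conjunct2, THEN conjunct2, THEN conjunct2]
  have fin: "finite A" using A[THEN conjunct1] .
  have irr: "\<And>a. a \<in> A \<Longrightarrow> \<not> lt a a" using A2 by blast
  have trn: "\<And>a b c. a \<in> A \<Longrightarrow> b \<in> A \<Longrightarrow> c \<in> A \<Longrightarrow> lt a b \<Longrightarrow> lt b c \<Longrightarrow> lt a c" using A3 by blast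
  have tot: "\<And>a b. a \<in> A \<Longrightarrow> b \<in> A \<Longrightarrow> a \<noteq> b \<Longrightarrow> lt a b \<or> lt b a" using A4 by blast
  have U: "P1 \<union> P2 = A" "P1 \<inter> P2 = {}" using A5 by blast+
  define n where "n = card A"
  define k where "k a = card {b\<in>A. lt b a} + 1" for a
  define \<delta> :: real where "\<delta> = 1 / (real n + 1)"
  have dpos: "\<delta> > 0" unfolding \<delta>_def by simp
  have k1: "k a \<ge> 1" for a unfolding k_def by simp
  have kn: "a \<in> A \<Longrightarrow> k a \<le> n" for a
  proof -
    assume a: "a \<in> A"
    have "{b\<in>A. lt b a} \<subseteq> A - {a}" using irr a by auto
    hence "card {b\<in>A. lt b a} \<le> card (A - {a})" using fin by (intro card_mono) auto
    thus ?thesis using a fin unfolding k_def n_def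
      by (metis Suc_eq_plus1 card_Diff1_less le_eq_less_or_eq less_eq_Suc_le order_le_less_trans)
  qed
  have kmono: "a \<in> A \<Longrightarrow> b \<in> A \<Longrightarrow> lt a b \<Longrightarrow> k a < k b" for a b
  proof -
    assume a: "a \<in> A" and b: "b \<in> A" and ab: "lt a b"
    have irr: "\<not> lt a a" and tr: "\<And>c. c \<in> A \<Longrightarrow> lt c a \<Longrightarrow> lt c b"
      using irr trn a b ab by meson+
    have "{c\<in>A. lt c a} \<subset> {c\<in>A. lt c b}" using irr tr a ab by blast
    hence "card {c\<in>A. lt c a} < card {c\<in>A. lt c b}" using fin by (intro psubset_card_mono) auto
    thus ?thesis unfolding k_def by simp
  qed
  have kdelta: "a \<in> A \<Longrightarrow> \<delta> * k a < 1" for a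
  proof -
    assume "a \<in> A"
    hence "real (k a) \<le> real n" using kn by simp
    hence "real (k a) < real n + 1" by simp
    thus ?thesis unfolding \<delta>_def by (simp add: field_simps)
  qed
  have kdelta1: "\<delta> * k a \<ge> \<delta>" for a using k1[of a] dpos by simp
  obtain d where dQ: "d \<in> \<rat>" and d1: "pi < d" and d2: "d < pi + \<delta>"
    using Rats_dense_in_real[of pi "pi + \<delta>"] dpos by auto
  define \<theta> where "\<theta> a = (if a \<in> P1 then \<delta> * k a else \<delta> * k a - d)" for a
  have dQ': "\<delta> \<in> \<rat>" unfolding \<delta>_def by simp
  have thQ: "\<theta> a \<in> \<rat>" for a unfolding \<theta>_def using dQ dQ' by auto
  have th1: "a \<in> P1 \<Longrightarrow> \<theta> a = \<delta> * k a" for a unfolding \<theta>_def by simp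
  have th2: "a \<notin> P1 \<Longrightarrow> \<theta> a = \<delta> * k a - d" for a unfolding \<theta>_def by simp
  have thr: "a \<in> A \<Longrightarrow> \<theta> a \<in> {-pi<..pi}" for a
  proof -
    assume a: "a \<in> A"
    have "\<theta> a > -pi \<and> \<theta> a \<le> pi"
      using kdelta[OF a] kdelta1[of a] d1 d2 pi_gt3 th1[of a] th2[of a] by (cases "a \<in> P1") linarith+
    thus ?thesis by simp
  qed
  define f where "f a = cis (\<theta> a)" for a
  have argf: "a \<in> A \<Longrightarrow> Arg (f a) = \<theta> a" for a unfolding f_def using thr by (simp add: Arg_cis)
  have kinj: "a \<in> A \<Longrightarrow> b \<in> A \<Longrightarrow> k a = k b \<Longrightarrow> a = b" for a b
    using kmono tot by (metis less_irrefl)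
  have inj: "inj_on f A"
  proof (rule inj_onI)
    fix a b assume a: "a \<in> A" and b: "b \<in> A" and e: "f a = f b"
    hence "\<theta> a = \<theta> b" using argf by metis
    moreover have "\<theta> a \<ge> 0 \<longleftrightarrow> a \<in> P1" if "a \<in> A" for a
      using kdelta[OF that] kdelta1[of a] d1 d2 pi_gt3 dpos th1[of a] th2[of a] by (cases "a \<in> P1") linarith+
    ultimately have "a \<in> P1 \<longleftrightarrow> b \<in> P1" using a b by metis
    with \<open>\<theta> a = \<theta> b\<close> have "\<delta> * k a = \<delta> * k b" using th1 th2 by (cases "a \<in> P1") auto
    hence "k a = k b" using dpos by simp
    thus "a = b" using kinj a b by blast
  qed
  have img: "f ` A \<subseteq> S2_vertices"
    unfolding S2_vertices_def using argf thQ by (auto simp: f_def)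
  have arcs: "p_arc lt P1 P2 a b \<longleftrightarrow> S2_arc (f a) (f b)" if a: "a \<in> A" and b: "b \<in> A" for a b
  proof (cases "a = b")
    case True
    have "\<not> lt a a" using irr a by blast
    thus ?thesis using True unfolding p_arc_def S2_arc_cis f_def by simp
  next
    case False
    have P: "a \<in> P2 \<longleftrightarrow> a \<notin> P1" "b \<in> P2 \<longleftrightarrow> b \<notin> P1" using U a b by blast+
    have ka: "\<delta> \<le> \<delta> * k a" "\<delta> * k a < 1" and kb: "\<delta> \<le> \<delta> * k b" "\<delta> * k b < 1"
      using kdelta kdelta1 a b by auto
    consider "lt a b" "\<not> lt b a" "k a < k b" | "lt b a" "\<not> lt a b" "k b < k a"
    proof -
      have tot: "lt a b \<or> lt b a" using tot a b False by blast
      have as: "\<not> (lt a b \<and> lt b a)"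
      proof
        assume "lt a b \<and> lt b a"
        hence "lt a a" using trn[OF a b a] by blast
        thus False using irr a by blast
      qed
      show "(lt a b \<Longrightarrow> \<not> lt b a \<Longrightarrow> k a < k b \<Longrightarrow> thesis) \<Longrightarrow> (lt b a \<Longrightarrow> \<not> lt a b \<Longrightarrow> k b < k a \<Longrightarrow> thesis) \<Longrightarrow> thesis"
        using tot as kmono[OF a b] kmono[OF b a] by blast
    qed
    then show ?thesis
    proof cases
      case 1
      have diff: "\<delta> * k b - \<delta> * k a \<ge> \<delta>"
      proof -
        have "real (k b) - real (k a) \<ge> 1" using 1 by linarith
        hence "\<delta> * (real (k b) - real (k a)) \<ge> \<delta> * 1" using dpos by (intro mult_left_mono) auto
        thus ?thesis by (simp add: algebra_simps)
      qed
      have "True" by simp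
      moreover have "a \<in> P1 \<Longrightarrow> b \<in> P1 \<Longrightarrow> 0 < sin (\<theta> b - \<theta> a)"
      proof -
        assume ca: "a \<in> P1" and cb: "b \<in> P1"
        show ?thesis
          by (rule sin_pos2) (use ka kb diff d1 d2 pi_gt3 th1[of a] th2[of a] th1[of b] th2[of b] ca cb in linarith)
      qed
      moreover have "a \<notin> P1 \<Longrightarrow> b \<notin> P1 \<Longrightarrow> 0 < sin (\<theta> b - \<theta> a)"
      proof -
        assume ca: "a \<notin> P1" and cb: "b \<notin> P1"
        show ?thesis
          by (rule sin_pos2) (use ka kb diff d1 d2 pi_gt3 th1[of a] th2[of a] th1[of b] th2[of b] ca cb in linarith)
      qed
      moreover have "a \<in> P1 \<Longrightarrow> b \<notin> P1 \<Longrightarrow> sin (\<theta> b - \<theta> a) < 0"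
      proof -
        assume ca: "a \<in> P1" and cb: "b \<notin> P1"
        show ?thesis
          by (rule sin_neg2) (use ka kb diff d1 d2 pi_gt3 th1[of a] th2[of a] th1[of b] th2[of b] ca cb in linarith)
      qed
      moreover have "a \<notin> P1 \<Longrightarrow> b \<in> P1 \<Longrightarrow> sin (\<theta> b - \<theta> a) < 0"
      proof -
        assume ca: "a \<notin> P1" and cb: "b \<in> P1"
        show ?thesis
          by (rule sin_neg2) (use ka kb diff d1 d2 pi_gt3 th1[of a] th2[of a] th1[of b] th2[of b] ca cb in linarith)
      qed
      ultimately show ?thesis unfolding f_def S2_arc_cis p_arc_def same_part_def
        using 1 P by (cases "a \<in> P1"; cases "b \<in> P1") auto
    next
      case 2
      have diff: "\<delta> * k a - \<delta> * k b \<ge> \<delta>"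
      proof -
        have "real (k a) - real (k b) \<ge> 1" using 2 by linarith
        hence "\<delta> * (real (k a) - real (k b)) \<ge> \<delta> * 1" using dpos by (intro mult_left_mono) auto
        thus ?thesis by (simp add: algebra_simps)
      qed
      have "True" by simp
      moreover have "a \<in> P1 \<Longrightarrow> b \<in> P1 \<Longrightarrow> sin (\<theta> b - \<theta> a) < 0"
      proof -
        assume ca: "a \<in> P1" and cb: "b \<in> P1"
        show ?thesis
          by (rule sin_neg2) (use ka kb diff d1 d2 pi_gt3 th1[of a] th2[of a] th1[of b] th2[of b] ca cb in linarith)
      qed
      moreover have "a \<notin> P1 \<Longrightarrow> b \<notin> P1 \<Longrightarrow> sin (\<theta> b - \<theta> a) < 0"
      proof -
        assume ca: "a \<notin> P1" and cb: "b \<notin> P1"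
        show ?thesis
          by (rule sin_neg2) (use ka kb diff d1 d2 pi_gt3 th1[of a] th2[of a] th1[of b] th2[of b] ca cb in linarith)
      qed
      moreover have "a \<in> P1 \<Longrightarrow> b \<notin> P1 \<Longrightarrow> 0 < sin (\<theta> b - \<theta> a)"
      proof -
        assume ca: "a \<in> P1" and cb: "b \<notin> P1"
        show ?thesis
          by (rule sin_pos2) (use ka kb diff d1 d2 pi_gt3 th1[of a] th2[of a] th1[of b] th2[of b] ca cb in linarith)
      qed
      moreover have "a \<notin> P1 \<Longrightarrow> b \<in> P1 \<Longrightarrow> 0 < sin (\<theta> b - \<theta> a)"
      proof -
        assume ca: "a \<notin> P1" and cb: "b \<in> P1"
        show ?thesis
          by (rule sin_pos2) (use ka kb diff d1 d2 pi_gt3 th1[of a] th2[of a] th1[of b] th2[of b] ca cb in linarith)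
      qed
      ultimately show ?thesis unfolding f_def S2_arc_cis p_arc_def same_part_def
        using 2 P by (cases "a \<in> P1"; cases "b \<in> P1") auto
    qed
  qed
  show ?thesis using inj img arcs by blast
qed

end
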